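(* Let $n,k$ be integers with $1\leq k\leq n-1$. Let $a\in\mathbb{Z}^n$ and $\alpha\in\mathbb{Z}$ be such that $ax\geq\alpha$ is a facet defining inequality of $Q(C_n^k)$ which is neither (a positive multiple of) a boolean facet nor (a positive multiple of) the rank constraint. Put $a^0=\min\{a_i:i\in\mathbb{Z}_n\}$, $W=\{i\in\mathbb{Z}_n:a_i>a^0\}$ and $\overline W=\mathbb{Z}_n\setminus W$. Then 1. $|C^i\cap\overline W|\geq 2$ for every $i\in\mathbb{Z}_n$; 2. $a_i\leq 2a^0$ for every $i\in W$.
   Context: $\mathbb{Z}_n=\{0,\dots,n-1\}$ with addition modulo $n$; $[a,b)_n$ denotes the $\mathbb{Z}_n$-cyclic interval from $a$ (included) to $b$ (excluded). For $i\in\mathbb{Z}_n$, $C^i=[i,i+k)_n$, and $C_n^k$ is the $n\times n$ $0,1$ matrix whose $i$-th row is the incidence vector of $C^i$. A cover of $C_n^k$ is $x\in\{0,1\}^n$ with $C_n^kx\geq\mathbf 1$; $Q(C_n^k)$ is the convex hull of the covers. The boolean facets are $x_i\geq0$, $x_i\leq1$, $\sum_{j\in C^i}x_j\geq1$ ($i\in\mathbb{Z}_n$); the rank constraint is $\sum_{i\in\mathbb{Z}_n}x_i\geq\lceil n/k\rceil$. *)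

theory Defs
  imports "HOL-Analysis.Analysis"
begin

text \<open>Coordinates of R^n are indexed by a finite type 'n with CARD('n) = n;
  a bijection idx : 'n -> {0..<n} identifies the index type with Z_n.\<close>

definition is_labelling :: "('n::finite \<Rightarrow> nat) \<Rightarrow> bool" where
  "is_labelling idx \<longleftrightarrow> bij_betw idx (UNIV::'n set) {..<CARD('n)}"

text \<open>Cyclic interval C^i = [i, i+k)_n.\<close>
definition cycC :: "('n::finite \<Rightarrow> nat) \<Rightarrow> nat \<Rightarrow> 'n \<Rightarrow> 'n set" where
  "cycC idx k i = {j. (idx j + CARD('n) - idx i) mod CARD('n) < k}"

definition is_cover :: "('n::finite \<Rightarrow> nat) \<Rightarrow> nat \<Rightarrow> real^'n \<Rightarrow> bool" where
  "is_cover idx k x \<longleftrightarrow> (\<forall>j. x$j = 0 \<or> x$j = 1) \<and> (\<forall>i. (\<Sum>j\<in>cycC idx k i. x$j) \<ge> 1)"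

definition Qcov :: "('n::finite \<Rightarrow> nat) \<Rightarrow> nat \<Rightarrow> (real^'n) set" where
  "Qcov idx k = convex hull {x. is_cover idx k x}"

definition lhs :: "int^'n \<Rightarrow> real^'n \<Rightarrow> real" where
  "lhs a x = (\<Sum>j\<in>UNIV. real_of_int (a$j) * x$j)"

definition facet_defining :: "(real^'n) set \<Rightarrow> int^'n \<Rightarrow> int \<Rightarrow> bool" where
  "facet_defining P a \<alpha> \<longleftrightarrow> (\<forall>x\<in>P. lhs a x \<ge> real_of_int \<alpha>)
      \<and> {x\<in>P. lhs a x = real_of_int \<alpha>} facet_of P"

definition pos_multiple :: "int^'n \<Rightarrow> int \<Rightarrow> (real^'n) \<Rightarrow> real \<Rightarrow> bool" where
  "pos_multiple a \<alpha> b \<beta> \<longleftrightarrow> (\<exists>c>0. (\<forall>j. real_of_int (a$j) = c * b$j) \<and> real_of_int \<alpha> = c * \<beta>)"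

definition is_boolean_facet :: "('n::finite \<Rightarrow> nat) \<Rightarrow> nat \<Rightarrow> int^'n \<Rightarrow> int \<Rightarrow> bool" where
  "is_boolean_facet idx k a \<alpha> \<longleftrightarrow> (\<exists>i.
      pos_multiple a \<alpha> (\<chi> j. if j = i then 1 else 0) 0
    \<or> pos_multiple a \<alpha> (\<chi> j. if j = i then -1 else 0) (-1)
    \<or> pos_multiple a \<alpha> (\<chi> j. if j \<in> cycC idx k i then 1 else 0) 1)"

definition is_rank_constraint :: "nat \<Rightarrow> int^'n::finite \<Rightarrow> int \<Rightarrow> bool" where
  "is_rank_constraint k a \<alpha> \<longleftrightarrow>
     pos_multiple a \<alpha> (\<chi> j. 1) (of_int \<lceil>real CARD('n) / real k\<rceil>)"

end

theory Submission
  imports Defs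
begin


locale circ =
  fixes idx :: "'n::finite \<Rightarrow> nat" and k :: nat
  assumes lab: "is_labelling idx" and k1: "1 \<le> k" and kN: "k < CARD('n)"
begin


definition pos :: "int \<Rightarrow> 'n" where "pos t = inv idx (nat (t mod int CARD('n)))"

lemma bij: "bij_betw idx UNIV {..<CARD('n)}" using lab by (simp add: is_labelling_def)
lemma idx_lt: "idx j < CARD('n)" using bij bij_betwE by blast
lemma inj_idx: "inj idx" using bij bij_betw_imp_inj_on by blast
lemma NN_pos: "int CARD('n) > 0" by simp

lemma pos_idx[simp]: "pos (int (idx j)) = j"
  unfolding pos_def using idx_lt[of j] inj_idx by (simp add: inv_f_f)

lemma idx_pos: "idx (pos t) = nat (t mod int CARD('n))"
proof -
  have "t mod int CARD('n) < int CARD('n)" "0 \<le> t mod int CARD('n)" by simp_all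
  then have "nat (t mod int CARD('n)) \<in> {..<CARD('n)}" by (simp add: nat_less_iff)
  moreover have "idx ` UNIV = {..<CARD('n)}" using bij by (simp add: bij_betw_def)
  ultimately have "nat (t mod int CARD('n)) \<in> range idx" by simp
  then show ?thesis unfolding pos_def by (rule f_inv_into_f)
qed

lemma pos_eq: "pos s = pos t \<longleftrightarrow> s mod int CARD('n) = t mod int CARD('n)"
proof
  assume "pos s = pos t"
  then have "nat (s mod int CARD('n)) = nat (t mod int CARD('n))" using idx_pos by metis
  moreover have "s mod int CARD('n) \<ge> 0" "t mod int CARD('n) \<ge> 0" by simp_all
  ultimately show "s mod int CARD('n) = t mod int CARD('n)" by (simp add: eq_nat_nat_iff)
qed (simp add: pos_def)

lemma pos_per[simp]: "pos (t + c * int CARD('n)) = pos t"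
  unfolding pos_eq by simp

lemma pos_shift: assumes "pos s = pos t" obtains c where "s = t + c * int CARD('n)"
proof -
  have e: "s mod int CARD('n) = t mod int CARD('n)" using assms pos_eq by blast
  have 1: "s = s div int CARD('n) * int CARD('n) + s mod int CARD('n)" by simp
  have 2: "t = t div int CARD('n) * int CARD('n) + t mod int CARD('n)" by simp
  have "s = t + (s div int CARD('n) - t div int CARD('n)) * int CARD('n)"
  proof -
    have "(s div int CARD('n) - t div int CARD('n)) * int CARD('n) = s div int CARD('n) * int CARD('n) - t div int CARD('n) * int CARD('n)"
      by (rule left_diff_distrib)
    then show ?thesis using 1 2 e by linarith
  qed
  then show ?thesis using that by blast
qed

lemma pos_neq: assumes "t < s" "s < t + int CARD('n)" shows "pos s \<noteq> pos t"
proof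
  assume "pos s = pos t"
  then obtain c where c: "s = t + c * int CARD('n)" by (rule pos_shift)
  then have h: "0 < c * int CARD('n)" "c * int CARD('n) < int CARD('n)" using assms by auto
  show False
  proof (cases "c \<ge> 1")
    case True
    then have "1 * int CARD('n) \<le> c * int CARD('n)" by (intro mult_right_mono) auto
    then show False using h by simp
  next
    case False
    then have "c \<le> 0" by simp
    then have "c * int CARD('n) \<le> 0" by (simp add: mult_nonpos_nonneg)
    then show False using h by simp
  qed
qed

lemma modN: "(x + int CARD('n) - y) mod int CARD('n) = (x - y) mod int CARD('n)"
proof -
  have "x + int CARD('n) - y = (x - y) + int CARD('n)" by simp
  then show ?thesis by (simp only: mod_add_self2)
qed

lemma kNi: "int k < int CARD('n)" using kN by simp

lemma cycC_eq: "cycC idx k i = pos ` {int (idx i)..<int (idx i) + int k}"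
proof safe
  fix j assume "j \<in> cycC idx k i"
  then have h: "(idx j + CARD('n) - idx i) mod CARD('n) < k" by (simp add: cycC_def)
  define t where "t = int (idx i) + int ((idx j + CARD('n) - idx i) mod CARD('n))"
  have "t mod int CARD('n) = int (idx j) mod int CARD('n)"
  proof -
    have "int ((idx j + CARD('n) - idx i) mod CARD('n)) = (int (idx j) + int CARD('n) - int (idx i)) mod int CARD('n)"
      using idx_lt[of i] by (simp add: zmod_int of_nat_diff)
    also have "\<dots> = (int (idx j) - int (idx i)) mod int CARD('n)"
      by (rule modN)
    finally have "t = int (idx i) + (int (idx j) - int (idx i)) mod int CARD('n)" by (simp add: t_def)
    then have "t mod int CARD('n) = (int (idx i) + (int (idx j) - int (idx i))) mod int CARD('n)"
      by (simp add: mod_add_right_eq)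
    then show ?thesis by simp
  qed
  then have "pos t = j" using pos_eq pos_idx by metis
  moreover have "t \<in> {int (idx i)..<int (idx i) + int k}" using h unfolding t_def by auto
  ultimately show "j \<in> pos ` {int (idx i)..<int (idx i) + int k}" by blast
next
  fix t assume t: "t \<in> {int (idx i)..<int (idx i) + int k}"
  have "idx (pos t) = nat (t mod int CARD('n))" by (rule idx_pos)
  have "(int (idx (pos t)) + int CARD('n) - int (idx i)) mod int CARD('n) = t - int (idx i)"
  proof -
    have "int (idx (pos t)) = t mod int CARD('n)" using idx_pos NN_pos by simp
    then have "(int (idx (pos t)) + int CARD('n) - int (idx i)) mod int CARD('n) = (t - int (idx i)) mod int CARD('n)"
      by (simp add: modN mod_diff_left_eq)
    also have "\<dots> = t - int (idx i)" using t kNi by (intro mod_pos_pos_trivial) auto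
    finally show ?thesis .
  qed
  moreover have "int ((idx (pos t) + CARD('n) - idx i) mod CARD('n)) = (int (idx (pos t)) + int CARD('n) - int (idx i)) mod int CARD('n)"
    using idx_lt[of i] by (simp add: zmod_int of_nat_diff)
  ultimately have "int ((idx (pos t) + CARD('n) - idx i) mod CARD('n)) < int k" using t by simp
  then show "pos t \<in> cycC idx k i" unfolding cycC_def by simp
qed


definition cov :: "'n set \<Rightarrow> bool" where
  "cov S \<longleftrightarrow> (\<forall>t. \<exists>j. t \<le> j \<and> j < t + int k \<and> pos j \<in> S)"

definition vs :: "'n set \<Rightarrow> real^'n" where "vs S = (\<chi> j. if j \<in> S then 1 else 0)"

lemma vs_nth[simp]: "vs S $ j = (if j \<in> S then 1 else 0)" by (simp add: vs_def)

lemma cov_mono: "cov S \<Longrightarrow> S \<subseteq> T \<Longrightarrow> cov T" unfolding cov_def by blast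

lemma cov_UNIV: "cov UNIV" unfolding cov_def
proof
  fix t show "\<exists>j. t \<le> j \<and> j < t + int k \<and> pos j \<in> UNIV" using k1 by (intro exI[of _ t]) simp
qed

lemma is_cover_iff: "is_cover idx k x \<longleftrightarrow> (\<exists>S. x = vs S \<and> cov S)"
proof
  assume h: "is_cover idx k x"
  define S where "S = {j. x$j = 1}"
  have x01: "\<forall>j. x$j = 0 \<or> x$j = 1" and sums: "\<forall>i. (\<Sum>j\<in>cycC idx k i. x$j) \<ge> 1"
    using h by (auto simp: is_cover_def)
  have "x = vs S" using x01 by (auto simp: vec_eq_iff S_def)
  moreover have "cov S" unfolding cov_def
  proof
    fix t
    have "(\<Sum>j\<in>cycC idx k (pos t). x$j) \<ge> 1" using sums by blast
    then obtain j where j: "j \<in> cycC idx k (pos t)" "x$j \<noteq> 0"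
      by (metis (no_types, lifting) sum.neutral not_one_le_zero)
    then have "x$j = 1" using x01 by blast
    from j(1) obtain t' where t': "t' \<in> {int (idx (pos t))..<int (idx (pos t)) + int k}" "j = pos t'"
      unfolding cycC_eq by blast
    have it: "int (idx (pos t)) = t mod int CARD('n)" using idx_pos by simp
    define t'' where "t'' = t' + (t div int CARD('n)) * int CARD('n)"
    have "pos t'' = j" using t' unfolding t''_def by simp
    moreover have "t \<le> t''" "t'' < t + int k" using t' it unfolding t''_def
      by (simp_all, metis add.commute div_mult_mod_eq add_le_cancel_left le_add_diff_inverse2 diff_add_cancel mult.commute linorder_not_less,
          smt (verit) div_mult_mod_eq)
    ultimately show "\<exists>j. t \<le> j \<and> j < t + int k \<and> pos j \<in> S" using \<open>x$j = 1\<close> S_def by blast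
  qed
  ultimately show "\<exists>S. x = vs S \<and> cov S" by blast
next
  assume "\<exists>S. x = vs S \<and> cov S"
  then obtain S where S: "x = vs S" "cov S" by blast
  have "(\<Sum>j\<in>cycC idx k i. x$j) \<ge> 1" for i
  proof -
    obtain j where j: "int (idx i) \<le> j" "j < int (idx i) + int k" "pos j \<in> S"
      using S(2) unfolding cov_def by blast
    then have "pos j \<in> cycC idx k i" unfolding cycC_eq by auto
    then have "x $ pos j \<le> (\<Sum>j\<in>cycC idx k i. x$j)"
      by (intro member_le_sum) (auto simp: S(1))
    then show ?thesis using j(3) S(1) by simp
  qed
  then show "is_cover idx k x" using S(1) by (auto simp: is_cover_def)
qed

lemma finite_covers: "finite {x. is_cover idx k x}"
proof -
  have "{x. is_cover idx k x} \<subseteq> vs ` UNIV" using is_cover_iff by blast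
  then show ?thesis by (rule finite_subset) simp
qed

end

lemma hyperplane_sub:
  fixes c b :: "'a::euclidean_space"
  assumes c: "c \<noteq> 0" and sub: "{x. c \<bullet> x = d} \<subseteq> {x. b \<bullet> x = e}"
  shows "\<exists>l. b = l *\<^sub>R c \<and> e = l * d"
proof -
  define l where "l = (b \<bullet> c) / (c \<bullet> c)"
  have cc: "c \<bullet> c \<noteq> 0" using c by simp
  define h where "h = (d / (c \<bullet> c)) *\<^sub>R c"
  have hH: "c \<bullet> h = d" using cc by (simp add: h_def)
  define u where "u = b - l *\<^sub>R c"
  have cu: "c \<bullet> u = 0" using cc by (simp add: u_def l_def inner_diff_right inner_commute)
  have "c \<bullet> (h + u) = d" using hH cu by (simp add: inner_add_right)
  then have "b \<bullet> (h + u) = e" "b \<bullet> h = e" using sub hH by auto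
  then have bu: "b \<bullet> u = 0" by (simp add: inner_add_right)
  have "u \<bullet> u = b \<bullet> u - l * (c \<bullet> u)" by (simp add: u_def inner_diff_left)
  then have "u \<bullet> u = 0" using bu cu by simp
  then have "u = 0" by simp
  then have bl: "b = l *\<^sub>R c" by (simp add: u_def)
  moreover have "e = l * d" using \<open>b \<bullet> h = e\<close> hH bl by simp
  ultimately show ?thesis by blast
qed

locale fac = circ idx k for idx :: "'n::finite \<Rightarrow> nat" and k +
  fixes a :: "int^'n" and \<alpha> :: int
  assumes fd: "facet_defining (Qcov idx k) a \<alpha>"
    and nb: "\<not> is_boolean_facet idx k a \<alpha>"
begin

definition ar :: "real^'n" where "ar = (\<chi> j. real_of_int (a$j))"
definition wt :: "'n set \<Rightarrow> int" where "wt S = (\<Sum>j\<in>S. a$j)"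

abbreviation V where "V \<equiv> {x. is_cover idx k x}"
abbreviation Q where "Q \<equiv> Qcov idx k"
abbreviation F where "F \<equiv> {x\<in>Q. lhs a x = real_of_int \<alpha>}"

lemma lhs_ar: "lhs a x = ar \<bullet> x"
  by (simp add: lhs_def ar_def inner_vec_def)

lemma inner_vs: "b \<bullet> vs S = (\<Sum>j\<in>S. b$j)"
  by (simp add: inner_vec_def if_distrib sum.If_cases)

lemma lhs_vs: "lhs a (vs S) = real_of_int (wt S)"
  by (simp add: lhs_ar inner_vs ar_def wt_def)

lemma Q_def': "Q = convex hull V" by (simp add: Qcov_def)

lemma valid: "cov S \<Longrightarrow> \<alpha> \<le> wt S"
proof -
  assume "cov S"
  then have "vs S \<in> Q" unfolding Q_def' using is_cover_iff by (intro hull_inc) blast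
  then have "lhs a (vs S) \<ge> real_of_int \<alpha>" using fd by (simp add: facet_defining_def)
  then show ?thesis by (simp add: lhs_vs)
qed

lemma Ffacet: "F facet_of Q" using fd unfolding facet_defining_def by blast

lemma ar_nz: "ar \<noteq> 0"
proof
  assume "ar = 0"
  then have "lhs a x = 0" for x by (simp add: lhs_ar)
  then have "F = Q \<or> F = {}" by (cases "\<alpha> = 0") simp_all
  moreover have "F \<noteq> {}" using Ffacet unfolding facet_of_def by blast
  ultimately show False using Ffacet facet_of_irrefl by metis
qed

lemma k2: "2 \<le> k"
proof (rule ccontr)
  assume "\<not> 2 \<le> k"
  then have k: "k = 1" using k1 by simp
  have "cov S \<Longrightarrow> S = UNIV" for S
  proof -
    assume "cov S"
    show "S = UNIV"
    proof
      show "UNIV \<subseteq> S"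
      proof
        fix j
        obtain t where "int (idx j) \<le> t" "t < int (idx j) + int k" "pos t \<in> S" using \<open>cov S\<close>
          unfolding cov_def by blast
        then have "t = int (idx j)" using k by simp
        then show "j \<in> S" using \<open>pos t \<in> S\<close> by simp
      qed
    qed simp
  qed
  have "V = {vs UNIV}"
  proof
    show "V \<subseteq> {vs UNIV}"
    proof
      fix x assume "x \<in> V"
      then obtain S where "x = vs S" "cov S" using is_cover_iff by blast
      then show "x \<in> {vs UNIV}" using \<open>\<And>S. cov S \<Longrightarrow> S = UNIV\<close> by blast
    qed
    show "{vs UNIV} \<subseteq> V" using is_cover_iff cov_UNIV by blast
  qed
  then have "Q = {vs UNIV}" unfolding Q_def' by (simp only: convex_hull_singleton)
  moreover have FQ: "F \<subseteq> Q" using Ffacet by (rule facet_of_imp_subset)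
  moreover have Fne: "F \<noteq> {}" using Ffacet unfolding facet_of_def by (elim conjE)
  ultimately have "F = Q" using subset_singleton_iff by metis
  then show False using Ffacet facet_of_irrefl by metis
qed

lemma cov_minus1: "cov (UNIV - {j})"
  unfolding cov_def
proof
  fix t
  have "t + 1 < t + int CARD('n)" using kNi k2 by linarith
  then have "pos t \<noteq> pos (t+1)" using pos_neq[of t "t+1"] by simp
  have k': "t + 1 < t + int k" using k2 by simp
  show "\<exists>j'. t \<le> j' \<and> j' < t + int k \<and> pos j' \<in> UNIV - {j}"
  proof (cases "pos t = j")
    case True
    then have "pos (t+1) \<in> UNIV - {j}" using \<open>pos t \<noteq> pos (t+1)\<close> by auto
    then show ?thesis using k' by (intro exI[of _ "t+1"]) auto
  next
    case False
    then show ?thesis using k' by (intro exI[of _ "t"]) auto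
  qed
qed

lemma affhull_V: "affine hull V = UNIV"
proof -
  have one: "vs UNIV \<in> V" using is_cover_iff cov_UNIV by blast
  define X where "X = (\<lambda>x. - vs UNIV + x) ` (V - {vs UNIV})"
  have ax: "axis j 1 \<in> span X" for j
  proof -
    have ne: "vs (UNIV - {j}) \<noteq> vs UNIV"
    proof
      assume "vs (UNIV - {j}) = vs UNIV"
      then have "vs (UNIV - {j}) $ j = vs UNIV $ j" by simp
      then show False by simp
    qed
    have "vs (UNIV - {j}) \<in> V" using is_cover_iff cov_minus1 by blast
    then have "vs (UNIV - {j}) \<in> V - {vs UNIV}" using ne by blast
    then have "- vs UNIV + vs (UNIV - {j}) \<in> X" unfolding X_def by (rule imageI)
    moreover have "- vs UNIV + vs (UNIV - {j}) = - axis j 1"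
      by (simp add: vec_eq_iff axis_def)
    ultimately have "- axis j (1::real) \<in> span X" using span_base by metis
    from span_neg[OF this] show ?thesis by simp
  qed
  have "Basis \<subseteq> span X"
  proof
    fix x :: "real^'n" assume "x \<in> Basis"
    then obtain i u where "u \<in> (Basis :: real set)" "x = axis i u" unfolding Basis_vec_def by blast
    then have "x = axis i 1" by simp
    then show "x \<in> span X" using ax by simp
  qed
  then have "span Basis \<subseteq> span X" using span_mono span_span by metis
  then have sp: "span X = UNIV" using span_Basis by blast
  have "x \<in> (\<lambda>x. vs UNIV + x) ` span X" for x
    by (rule image_eqI[of _ _ "x - vs UNIV"]) (simp, simp add: sp)
  then show ?thesis using affine_hull_span2[OF one] unfolding X_def by blast
qed

lemma affdimQ: "aff_dim Q = int DIM(real^'n)"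
  unfolding Q_def' aff_dim_convex_hull using affhull_V aff_dim_eq_full by blast

lemma E:
  fixes b :: "real^'n" and \<beta> :: real
  assumes h: "\<And>S. cov S \<Longrightarrow> wt S = \<alpha> \<Longrightarrow> (\<Sum>j\<in>S. b$j) = \<beta>"
  shows "\<exists>l. (\<forall>j. b$j = l * real_of_int (a$j)) \<and> \<beta> = l * real_of_int \<alpha>"
proof -
  have cpt: "compact V" using finite_covers by (rule finite_imp_compact)
  have "F face_of Q" using Ffacet by (rule facet_of_imp_face_of)
  then have "F face_of convex hull V" by (simp only: Q_def')
  then obtain V' where V': "V' \<subseteq> V" "F = convex hull V'"
    using face_of_convex_hull_subset[OF cpt] by blast
  have "V' \<subseteq> {x. b \<bullet> x = \<beta>}"
  proof
    fix v assume v: "v \<in> V'"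
    have "v \<in> convex hull V'" using v by (rule hull_inc)
    then have "v \<in> F" by (subst V'(2))
    then have lv: "lhs a v = real_of_int \<alpha>" by blast
    have "v \<in> V" using v V'(1) by (rule subsetD[rotated])
    then obtain S where S: "v = vs S" "cov S" using is_cover_iff by blast
    then have "real_of_int (wt S) = real_of_int \<alpha>" using lv lhs_vs by metis
    then have "wt S = \<alpha>" by (rule of_int_eq_iff[THEN iffD1])
    then have "(\<Sum>j\<in>S. b$j) = \<beta>" using h S(2) by blast
    then have "b \<bullet> v = \<beta>" using S(1) inner_vs by metis
    then show "v \<in> {x. b \<bullet> x = \<beta>}" by (rule CollectI)
  qed
  then have "convex hull V' \<subseteq> {x. b \<bullet> x = \<beta>}" by (rule hull_minimal) (rule convex_hyperplane)
  then have Fb: "F \<subseteq> {x. b \<bullet> x = \<beta>}" by (subst V'(2))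
  have Fa: "F \<subseteq> {x. ar \<bullet> x = real_of_int \<alpha>}"
  proof
    fix x assume "x \<in> F"
    then have "lhs a x = real_of_int \<alpha>" by blast
    then show "x \<in> {x. ar \<bullet> x = real_of_int \<alpha>}" by (simp only: lhs_ar mem_Collect_eq)
  qed
  have "aff_dim F = aff_dim Q - 1" by (rule Ffacet[unfolded facet_of_def, THEN conjunct2, THEN conjunct2])
  moreover have "int (DIM(real^'n) - 1) = int DIM(real^'n) - 1"
    using DIM_positive[where 'a="real^'n"] by (simp add: of_nat_diff)
  ultimately have "aff_dim F = int (DIM(real^'n) - 1)" using affdimQ by linarith
  with aff_dim_eq_hyperplane[of F] have ex: "\<exists>c d. c \<noteq> 0 \<and> affine hull F = {x. c \<bullet> x = d}"
    by (rule iffD1)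
  then obtain c d where cd0: "c \<noteq> 0 \<and> affine hull F = {x. c \<bullet> x = d}" by (elim exE) (rule that)
  have cd: "c \<noteq> 0" "affine hull F = {x. c \<bullet> x = d}" using cd0 by (rule conjunct1, rule conjunct2)
  have "affine hull F \<subseteq> {x. b \<bullet> x = \<beta>}" using Fb by (rule hull_minimal) (rule affine_hyperplane)
  then have "{x. c \<bullet> x = d} \<subseteq> {x. b \<bullet> x = \<beta>}" by (subst cd(2)[symmetric])
  from hyperplane_sub[OF cd(1) this] obtain l2 where l2: "b = l2 *\<^sub>R c" "\<beta> = l2 * d" by blast
  have "affine hull F \<subseteq> {x. ar \<bullet> x = real_of_int \<alpha>}" using Fa by (rule hull_minimal) (rule affine_hyperplane)
  then have "{x. c \<bullet> x = d} \<subseteq> {x. ar \<bullet> x = real_of_int \<alpha>}" by (subst cd(2)[symmetric])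
  from hyperplane_sub[OF cd(1) this] obtain l1 where l1: "ar = l1 *\<^sub>R c" "real_of_int \<alpha> = l1 * d" by blast
  have l1nz: "l1 \<noteq> 0"
  proof
    assume "l1 = 0"
    then have "ar = 0" using l1(1) by simp
    then show False using ar_nz by contradiction
  qed
  have "\<forall>j. b$j = (l2/l1) * real_of_int (a$j)"
  proof
    fix j
    have "real_of_int (a$j) = l1 * c $ j" using l1(1) by (simp add: ar_def vec_eq_iff)
    then have "(l2/l1) * real_of_int (a$j) = l2 * c $ j" using l1nz by simp
    moreover have "b $ j = l2 * c $ j" using l2(1) by simp
    ultimately show "b$j = (l2/l1) * real_of_int (a$j)" by simp
  qed
  moreover have "\<beta> = (l2/l1) * real_of_int \<alpha>"
  proof -
    have "(l2/l1) * real_of_int \<alpha> = l2 * d" using l1(2) l1nz by simp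
    then show ?thesis using l2(2) by simp
  qed
  ultimately show ?thesis by blast
qed

end


context fac begin

definition root :: "'n set \<Rightarrow> bool" where "root S \<longleftrightarrow> cov S \<and> wt S = \<alpha>"

lemma wt_single:
  assumes "\<And>i. i \<noteq> j \<Longrightarrow> a$i = 0"
  shows "wt UNIV = a$j"
proof -
  have "wt UNIV = a$j + (\<Sum>i\<in>UNIV - {j}. a$i)" unfolding wt_def by (rule sum.remove) simp_all
  moreover have "(\<Sum>i\<in>UNIV - {j}. a$i) = 0" using assms by (intro sum.neutral) blast
  ultimately show ?thesis by simp
qed

lemma sum_ind: "(\<Sum>i\<in>S. (\<chi> i. if i \<in> C then (1::real) else 0) $ i) = real (card (S \<inter> C))"
proof -
  have "(\<Sum>i\<in>S. (\<chi> i. if i \<in> C then (1::real) else 0) $ i) = (\<Sum>i\<in>S. if i \<in> C then (1::real) else 0)"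
    by simp
  also have "\<dots> = (\<Sum>i\<in>S \<inter> C. (1::real))" by (simp add: sum.inter_restrict[symmetric] Int_commute)
  also have "\<dots> = real (card (S \<inter> C))" by simp
  finally show ?thesis .
qed

lemma root_in: "\<exists>S. root S \<and> j \<in> S"
proof (rule ccontr)
  assume "\<not> (\<exists>S. root S \<and> j \<in> S)"
  then have h: "\<And>S. cov S \<Longrightarrow> wt S = \<alpha> \<Longrightarrow> (\<Sum>i\<in>S. (\<chi> i. if i \<in> {j} then (1::real) else 0) $ i) = 0"
    unfolding root_def sum_ind by auto
  have "\<exists>l. (\<forall>i. (\<chi> i. if i \<in> {j} then (1::real) else 0) $ i = l * real_of_int (a$i)) \<and> 0 = l * real_of_int \<alpha>"
    by (rule E) (rule h)
  then obtain l where l: "\<forall>i. (\<chi> i. if i \<in> {j} then (1::real) else 0) $ i = l * real_of_int (a$i)" "0 = l * real_of_int \<alpha>" by blast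
  have lj: "1 = l * real_of_int (a$j)" using l(1)[rule_format, of j] by simp
  then have l0: "l \<noteq> 0" by auto
  have ai: "i \<noteq> j \<Longrightarrow> a$i = 0" for i
  proof -
    assume "i \<noteq> j"
    then have "0 = l * real_of_int (a$i)" using l(1)[rule_format, of i] by simp
    then show "a$i = 0" using l0 by simp
  qed
  have al: "\<alpha> = 0" using l(2) l0 by simp
  show False
  proof (cases "l > 0")
    case True
    have "pos_multiple a \<alpha> (\<chi> i. if i = j then 1 else 0) 0"
      unfolding pos_multiple_def
    proof (intro exI[of _ "1/l"] conjI allI)
      show "0 < 1/l" using True by simp
      fix i show "real_of_int (a$i) = 1 / l * (\<chi> i. if i = j then 1 else 0) $ i"
        using lj ai[of i] l0 by (cases "i = j") (auto simp: field_simps)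
    qed (simp add: al)
    then show False using nb unfolding is_boolean_facet_def by blast
  next
    case False
    then have "l < 0" using l0 by simp
    have "real_of_int (a$j) < 0"
    proof (rule ccontr)
      assume "\<not> real_of_int (a$j) < 0"
      then have "0 \<le> real_of_int (a$j)" by simp
      then have "l * real_of_int (a$j) \<le> 0" using \<open>l < 0\<close> by (simp add: mult_nonpos_nonneg)
      then show False using lj by simp
    qed
    then have "a$j < 0" by simp
    moreover have "\<alpha> \<le> wt UNIV" using valid cov_UNIV by blast
    ultimately show False using wt_single[OF ai] al by simp
  qed
qed

lemma root_out: "\<exists>S. root S \<and> j \<notin> S"
proof (rule ccontr)
  assume "\<not> (\<exists>S. root S \<and> j \<notin> S)"
  then have h: "\<And>S. cov S \<Longrightarrow> wt S = \<alpha> \<Longrightarrow> (\<Sum>i\<in>S. (\<chi> i. if i \<in> {j} then (1::real) else 0) $ i) = 1"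
    unfolding root_def sum_ind by auto
  have "\<exists>l. (\<forall>i. (\<chi> i. if i \<in> {j} then (1::real) else 0) $ i = l * real_of_int (a$i)) \<and> 1 = l * real_of_int \<alpha>"
    by (rule E) (rule h)
  then obtain l where l: "\<forall>i. (\<chi> i. if i \<in> {j} then (1::real) else 0) $ i = l * real_of_int (a$i)" "1 = l * real_of_int \<alpha>" by blast
  have lj: "1 = l * real_of_int (a$j)" using l(1)[rule_format, of j] by simp
  then have l0: "l \<noteq> 0" by auto
  have ai: "i \<noteq> j \<Longrightarrow> a$i = 0" for i
  proof -
    assume "i \<noteq> j"
    then have "0 = l * real_of_int (a$i)" using l(1)[rule_format, of i] by simp
    then show "a$i = 0" using l0 by simp
  qed
  show False
  proof (cases "l > 0")
    case True
    have "real_of_int \<alpha> > 0"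
    proof (rule ccontr)
      assume "\<not> real_of_int \<alpha> > 0"
      then have "real_of_int \<alpha> \<le> 0" by simp
      then have "l * real_of_int \<alpha> \<le> 0" using True by (simp add: mult_nonneg_nonpos)
      then show False using l(2) by simp
    qed
    then have "\<alpha> > 0" by simp
    moreover have "\<alpha> \<le> wt (UNIV - {j})" using valid cov_minus1 by blast
    moreover have "wt (UNIV - {j}) = 0" unfolding wt_def using ai by (intro sum.neutral) blast
    ultimately show False by simp
  next
    case False
    then have lneg: "l < 0" using l0 by simp
    have "pos_multiple a \<alpha> (\<chi> i. if i = j then -1 else 0) (-1)"
      unfolding pos_multiple_def
    proof (intro exI[of _ "-1/l"] conjI allI)
      show "0 < -1/l" using lneg by simp
      fix i show "real_of_int (a$i) = -1 / l * (\<chi> i. if i = j then -1 else 0) $ i"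
        using lj ai[of i] l0 by (cases "i = j") (auto simp: field_simps)
    next
      show "real_of_int \<alpha> = -1 / l * -1" using l(2) l0 by (simp add: field_simps)
    qed
    then show False using nb unfolding is_boolean_facet_def by blast
  qed
qed

lemma cycC_pos: "cycC idx k (pos t) = pos ` {t..<t + int k}"
proof -
  have it: "int (idx (pos t)) = t mod int CARD('n)" using idx_pos by simp
  define c where "c = t div int CARD('n)"
  have tc: "t = t mod int CARD('n) + c * int CARD('n)" unfolding c_def by simp
  show ?thesis unfolding cycC_eq it
  proof safe
    fix x assume x: "x \<in> {t mod int CARD('n)..<t mod int CARD('n) + int k}"
    have "pos x = pos (x + c * int CARD('n))" by simp
    moreover have "x + c * int CARD('n) \<in> {t..<t + int k}" using x tc by auto
    ultimately show "pos x \<in> pos ` {t..<t + int k}" by blast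
  next
    fix x assume x: "x \<in> {t..<t + int k}"
    have "pos x = pos (x + (- c) * int CARD('n))" by (rule pos_per[symmetric])
    moreover have "x + (- c) * int CARD('n) \<in> {t mod int CARD('n)..<t mod int CARD('n) + int k}" using x tc by auto
    ultimately show "pos x \<in> pos ` {t mod int CARD('n)..<t mod int CARD('n) + int k}" by blast
  qed
qed

lemma root_two: "\<exists>S j1 j2. root S \<and> t \<le> j1 \<and> j1 < j2 \<and> j2 < t + int k \<and> pos j1 \<in> S \<and> pos j2 \<in> S"
proof (rule ccontr)
  assume nt: "\<not> ?thesis"
  define C where "C = cycC idx k (pos t)"
  have C: "C = pos ` {t..<t + int k}" unfolding C_def by (rule cycC_pos)
  have one: "card (S \<inter> C) = 1" if r: "root S" for S
  proof -
    obtain j where j: "t \<le> j" "j < t + int k" "pos j \<in> S" using r unfolding root_def cov_def by blast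
    have "S \<inter> C = {pos j}"
    proof
      show "{pos j} \<subseteq> S \<inter> C" using j C by auto
      show "S \<inter> C \<subseteq> {pos j}"
      proof
        fix x assume x: "x \<in> S \<inter> C"
        then obtain j' where j': "t \<le> j'" "j' < t + int k" "x = pos j'" using C by auto
        have "\<not> (j < j')" using nt r j j' x by blast
        moreover have "\<not> (j' < j)" using nt r j j' x by blast
        ultimately have "j = j'" by simp
        then show "x \<in> {pos j}" using j' by simp
      qed
    qed
    then show ?thesis by simp
  qed
  have h: "\<And>S. cov S \<Longrightarrow> wt S = \<alpha> \<Longrightarrow> (\<Sum>i\<in>S. (\<chi> i. if i \<in> C then (1::real) else 0) $ i) = 1"
    using one unfolding root_def sum_ind by simp
  have "\<exists>l. (\<forall>i. (\<chi> i. if i \<in> C then (1::real) else 0) $ i = l * real_of_int (a$i)) \<and> 1 = l * real_of_int \<alpha>"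
    by (rule E) (rule h)
  then obtain l where l: "\<forall>i. (\<chi> i. if i \<in> C then (1::real) else 0) $ i = l * real_of_int (a$i)" "1 = l * real_of_int \<alpha>" by blast
  have l0: "l \<noteq> 0" using l(2) by auto
  have aC: "i \<in> C \<Longrightarrow> real_of_int (a$i) = 1/l" for i
  proof -
    assume "i \<in> C"
    then have "1 = l * real_of_int (a$i)" using l(1)[rule_format, of i] by simp
    then show ?thesis using l0 by (simp add: field_simps)
  qed
  have anC: "i \<notin> C \<Longrightarrow> a$i = 0" for i
  proof -
    assume "i \<notin> C"
    then have "0 = l * real_of_int (a$i)" using l(1)[rule_format, of i] by simp
    then show ?thesis using l0 by simp
  qed
  have al: "real_of_int \<alpha> = 1/l" using l(2) l0 by (simp add: field_simps)
  show False
  proof (cases "l > 0")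
    case True
    have "pos_multiple a \<alpha> (\<chi> i. if i \<in> cycC idx k (pos t) then 1 else 0) 1"
      unfolding pos_multiple_def
    proof (intro exI[of _ "1/l"] conjI allI)
      show "0 < 1/l" using True by simp
      fix i show "real_of_int (a$i) = 1 / l * (\<chi> i. if i \<in> cycC idx k (pos t) then 1 else 0) $ i"
        using aC[of i] anC[of i] unfolding C_def by (cases "i \<in> cycC idx k (pos t)") auto
    qed (simp add: al)
    then show False using nb unfolding is_boolean_facet_def by blast
  next
    case False
    then have lneg: "l < 0" using l0 by simp
    have "real_of_int (wt UNIV) = (\<Sum>i\<in>UNIV. real_of_int (a$i))" by (simp add: wt_def)
    also have "\<dots> = (\<Sum>i\<in>UNIV. if i \<in> C then 1/l else 0)"
      using aC anC by (intro sum.cong) auto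
    also have "\<dots> = real (card C) * (1/l)"
      by (simp add: sum.If_cases)
    finally have wU: "real_of_int (wt UNIV) = real (card C) * (1/l)" .
    have "\<alpha> \<le> wt UNIV" using valid cov_UNIV by blast
    then have "1/l \<le> real (card C) * (1/l)" using wU al by linarith
    then have "1 * (1/l) \<le> real (card C) * (1/l)" by simp
    moreover have "1/l < 0" using lneg by simp
    ultimately have "real (card C) \<le> 1" by (simp only: mult_le_cancel_right)
    then have c1: "card C \<le> 1" by simp
    have "pos t \<in> C" "pos (t+1) \<in> C" using C k2 by auto
    moreover have "pos (t+1) \<noteq> pos t" using pos_neq[of t "t+1"] kNi k2 by simp
    ultimately have "card {pos t, pos (t+1)} \<le> card C" by (intro card_mono) auto
    moreover have "card {pos t, pos (t+1)} = 2" using \<open>pos (t+1) \<noteq> pos t\<close> by simp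
    ultimately show False using c1 by simp
  qed
qed

end


context fac begin

lemma wt_insert: "j \<notin> S \<Longrightarrow> wt (insert j S) = a$j + wt S"
  unfolding wt_def by (rule sum.insert) simp_all

lemma wt_remove: "j \<in> S \<Longrightarrow> wt S = a$j + wt (S - {j})"
  unfolding wt_def by (rule sum.remove) simp_all

lemma a_nonneg: "0 \<le> a$j"
proof (rule ccontr)
  assume "\<not> 0 \<le> a$j"
  then have neg: "a$j < 0" by simp
  obtain S where S: "root S" "j \<notin> S" using root_out by blast
  have "cov (insert j S)" using S(1) unfolding root_def by (blast intro: cov_mono)
  then have "\<alpha> \<le> wt (insert j S)" by (rule valid)
  also have "\<dots> = a$j + wt S" using S(2) by (rule wt_insert)
  also have "\<dots> = a$j + \<alpha>" using S(1) unfolding root_def by simp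
  finally show False using neg by simp
qed

lemma wt_nonneg: "0 \<le> wt S"
  unfolding wt_def using a_nonneg by (simp add: sum_nonneg)

lemma wt_insert_le: "wt (insert j S) \<le> a$j + wt S"
proof (cases "j \<in> S")
  case True
  then have "insert j S = S" by blast
  then show ?thesis using a_nonneg[of j] by simp
next
  case False
  then show ?thesis by (simp add: wt_insert)
qed

lemma a_ne0: "\<exists>i. a$i \<noteq> 0"
proof (rule ccontr)
  assume "\<not> (\<exists>i. a$i \<noteq> 0)"
  then have "ar = 0" by (simp add: ar_def vec_eq_iff)
  then show False using ar_nz by contradiction
qed

lemma pos_of_idx: "pos (int (idx j)) = j" by simp

lemma exists_d: "\<exists>d::nat. pos (t + int d) = z"
proof -
  define d where "d = nat ((int (idx z) - t) mod int CARD('n))"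
  have "int d = (int (idx z) - t) mod int CARD('n)" unfolding d_def by simp
  then have "(t + int d) mod int CARD('n) = int (idx z) mod int CARD('n)"
    by (simp add: mod_add_right_eq)
  then have "pos (t + int d) = pos (int (idx z))" using pos_eq by blast
  then show ?thesis by auto
qed

lemma exists_d': "\<exists>d::nat. pos (t - int d) = z"
proof -
  define d where "d = nat ((t - int (idx z)) mod int CARD('n))"
  have "int d = (t - int (idx z)) mod int CARD('n)" unfolding d_def by simp
  then have "(t - int d) mod int CARD('n) = int (idx z) mod int CARD('n)"
    by (simp add: mod_diff_right_eq)
  then have "pos (t - int d) = pos (int (idx z))" using pos_eq by blast
  then show ?thesis by auto
qed

lemma a_pos: "0 < a$z"
proof (rule ccontr)
  assume "\<not> 0 < a$z"
  then have z0: "a$z = 0" using a_nonneg[of z] by simp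
  define Zs where "Zs = {i. a$i = 0}"
  show False
  proof (cases "cov Zs")
    case True
    have "wt Zs = 0" unfolding wt_def Zs_def by simp
    then have al: "\<alpha> \<le> 0" using valid[OF True] by simp
    obtain i where i: "a$i \<noteq> 0" using a_ne0 by blast
    then have ai: "0 < a$i" using a_nonneg[of i] by simp
    obtain S where S: "root S" "i \<in> S" using root_in by blast
    have "wt S = a$i + wt (S - {i})" using S(2) by (rule wt_remove)
    then have "a$i \<le> wt S" using wt_nonneg[of "S - {i}"] by simp
    then show False using S(1) al ai unfolding root_def by simp
  next
    case False
    then obtain t0 where t0: "\<And>j. t0 \<le> j \<Longrightarrow> j < t0 + int k \<Longrightarrow> pos j \<notin> Zs"
      unfolding cov_def by blast
    define D where "D = {d::nat. pos (t0 - int d) \<in> Zs}"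
    obtain dz where "pos (t0 - int dz) = z" using exists_d' by blast
    then have "dz \<in> D" using z0 unfolding D_def Zs_def by simp
    define d0 where "d0 = (LEAST d. d \<in> D)"
    have d0D: "d0 \<in> D" unfolding d0_def using \<open>dz \<in> D\<close> by (rule LeastI)
    have d0min: "d < d0 \<Longrightarrow> d \<notin> D" for d unfolding d0_def by (rule not_less_Least)
    have "d0 \<noteq> 0"
    proof
      assume "d0 = 0"
      then have "pos t0 \<in> Zs" using d0D unfolding D_def by simp
      moreover have "pos t0 \<notin> Zs" using t0[of t0] k1 by simp
      ultimately show False by blast
    qed
    define s where "s = t0 - int d0 + 1"
    have sZ: "pos (s - 1) \<in> Zs" using d0D unfolding D_def s_def by simp
    have win: "pos j \<notin> Zs" if j: "s \<le> j" "j < s + int k" for j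
    proof (cases "j \<le> t0")
      case True
      define d' where "d' = nat (t0 - j)"
      have "int d' = t0 - j" unfolding d'_def using True by simp
      then have "d' < d0" using j(1) unfolding s_def by simp
      then have "d' \<notin> D" by (rule d0min)
      then show ?thesis unfolding D_def using \<open>int d' = t0 - j\<close> by simp
    next
      case False
      then show ?thesis using t0[of j] j \<open>d0 \<noteq> 0\<close> unfolding s_def by simp
    qed
    obtain S j1 j2 where S: "root S" "s \<le> j1" "j1 < j2" "j2 < s + int k" "pos j1 \<in> S" "pos j2 \<in> S"
      using root_two[of s] by blast
    define S' where "S' = S \<union> Zs"
    define S'' where "S'' = S' - {pos j1}"
    have p1Z: "pos j1 \<notin> Zs" using win S(2,3,4) by simp
    have ap1: "0 < a$(pos j1)" using p1Z a_nonneg[of "pos j1"] unfolding Zs_def by simp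
    have wS': "wt S' = wt S"
    proof -
      have "S' = S \<union> (Zs - S)" unfolding S'_def by blast
      moreover have "wt (S \<union> (Zs - S)) = wt S + wt (Zs - S)" unfolding wt_def
        by (rule sum.union_disjoint) auto
      ultimately have "wt S' = wt S + wt (Zs - S)" by simp
      moreover have "wt (Zs - S) = 0" unfolding wt_def Zs_def by simp
      ultimately show ?thesis by simp
    qed
    have "wt S' = a$(pos j1) + wt S''" unfolding S''_def
      by (rule wt_remove) (simp add: S'_def S(5))
    then have wS'': "wt S'' = \<alpha> - a$(pos j1)" using wS' S(1) unfolding root_def by simp
    have pne: "pos j2 \<noteq> pos j1" using pos_neq[of j1 j2] S(2,3,4) kNi by simp
    have "cov S''" unfolding cov_def
    proof
      fix t
      obtain j where j: "t \<le> j" "j < t + int k" "pos j \<in> S" using S(1) unfolding root_def cov_def by blast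
      show "\<exists>j. t \<le> j \<and> j < t + int k \<and> pos j \<in> S''"
      proof (cases "pos j = pos j1")
        case False
        then show ?thesis using j unfolding S''_def S'_def by blast
      next
        case True
        then obtain c where c: "j = j1 + c * int CARD('n)" by (rule pos_shift)
        show ?thesis
        proof (cases "j2 + c * int CARD('n) < t + int k")
          case True
          have "pos (j2 + c * int CARD('n)) = pos j2" by simp
          moreover have "t \<le> j2 + c * int CARD('n)" using j(1) c S(3) by simp
          ultimately show ?thesis using True S(6) pne unfolding S''_def S'_def by (intro exI[of _ "j2 + c * int CARD('n)"]) simp
        next
          case False
          have "pos (s - 1 + c * int CARD('n)) = pos (s - 1)" by simp
          moreover have "t \<le> s - 1 + c * int CARD('n)" using False S(4) by simp
          moreover have "s - 1 + c * int CARD('n) < t + int k" using j(2) c S(2) by simp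
          moreover have "pos (s - 1) \<noteq> pos j1" using sZ p1Z by auto
          ultimately show ?thesis using sZ unfolding S''_def S'_def by (intro exI[of _ "s - 1 + c * int CARD('n)"]) simp
        qed
      qed
    qed
    then have "\<alpha> \<le> wt S''" by (rule valid)
    then show False using wS'' ap1 by simp
  qed
qed

end


context fac begin

lemma XL:
  assumes r: "root S" and x: "x \<in> S" and c: "cov (insert y (S - {x}))"
  shows "a$x \<le> a$y"
proof -
  have "\<alpha> \<le> wt (insert y (S - {x}))" using c by (rule valid)
  also have "\<dots> \<le> a$y + wt (S - {x})" by (rule wt_insert_le)
  also have "wt (S - {x}) = wt S - a$x" using wt_remove[OF x] by simp
  finally show ?thesis using r unfolding root_def by simp
qed

lemma G:
  assumes r: "root S" and px: "pos x \<in> S"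
    and h: "\<And>t. t \<le> x \<Longrightarrow> x < t + int k \<Longrightarrow>
              (t \<le> y \<and> y < t + int k) \<or> (\<exists>j. t \<le> j \<and> j < t + int k \<and> pos j \<in> S \<and> pos j \<noteq> pos x)"
  shows "a$(pos x) \<le> a$(pos y)"
proof (rule XL[OF r px])
  show "cov (insert (pos y) (S - {pos x}))" unfolding cov_def
  proof
    fix t
    obtain j where j: "t \<le> j" "j < t + int k" "pos j \<in> S" using r unfolding root_def cov_def by blast
    show "\<exists>j. t \<le> j \<and> j < t + int k \<and> pos j \<in> insert (pos y) (S - {pos x})"
    proof (cases "pos j = pos x")
      case False
      then show ?thesis using j by blast
    next
      case True
      then obtain c where c: "j = x + c * int CARD('n)" by (rule pos_shift)
      have "t - c * int CARD('n) \<le> x" "x < t - c * int CARD('n) + int k" using j c by simp_all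
      then have hh: "(t - c * int CARD('n) \<le> y \<and> y < t - c * int CARD('n) + int k) \<or>
          (\<exists>j. t - c * int CARD('n) \<le> j \<and> j < t - c * int CARD('n) + int k \<and> pos j \<in> S \<and> pos j \<noteq> pos x)"
        by (rule h)
      show ?thesis
      proof (cases "t - c * int CARD('n) \<le> y \<and> y < t - c * int CARD('n) + int k")
        case True
        have "pos (y + c * int CARD('n)) = pos y" by simp
        then show ?thesis using True by (intro exI[of _ "y + c * int CARD('n)"]) auto
      next
        case False
        then obtain j' where j': "t - c * int CARD('n) \<le> j'" "j' < t - c * int CARD('n) + int k"
          "pos j' \<in> S" "pos j' \<noteq> pos x" using hh by blast
        have "pos (j' + c * int CARD('n)) = pos j'" by simp
        then show ?thesis using j' by (intro exI[of _ "j' + c * int CARD('n)"]) auto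
      qed
    qed
  qed
qed

definition mn where "mn = Min (range (\<lambda>l. a$l))"

lemma mn_le: "mn \<le> a$l" unfolding mn_def by (rule Min_le) simp_all

lemma mn_ex: "\<exists>l. a$l = mn"
proof -
  have "mn \<in> range (\<lambda>l. a$l)" unfolding mn_def by (rule Min_in) simp_all
  then show ?thesis by auto
qed

lemma Mfree_impossible:
  assumes v: "a$(pos v) = mn" and free: "\<And>j. v - int k \<le> j \<Longrightarrow> j < v \<Longrightarrow> a$(pos j) \<noteq> mn"
  shows False
proof -
  obtain S j1 j2 where S: "root S" "v - int k \<le> j1" "j1 < j2" "j2 < v - int k + int k" "pos j1 \<in> S" "pos j2 \<in> S"
    using root_two[of "v - int k"] by blast
  have pne: "pos j2 \<noteq> pos j1" using pos_neq[of j1 j2] S(2,3,4) kNi by simp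
  have "a$(pos j2) \<le> a$(pos v)"
  proof (rule G[OF S(1) S(6)])
    fix t assume t: "t \<le> j2" "j2 < t + int k"
    show "(t \<le> v \<and> v < t + int k) \<or> (\<exists>j. t \<le> j \<and> j < t + int k \<and> pos j \<in> S \<and> pos j \<noteq> pos j2)"
    proof (cases "v < t + int k")
      case True
      then show ?thesis using t S(4) by simp
    next
      case False
      then show ?thesis using t S(2,3,5) pne by (intro disjI2 exI[of _ j1]) auto
    qed
  qed
  then have "a$(pos j2) = mn" using v mn_le[of "pos j2"] by simp
  then show False using free[of j2] S(2,3,4) by simp
qed


lemma lastM:
  assumes S: "root S" "v - int k \<le> j1" "j1 < j2" "j2 < v" "pos j1 \<in> S" "pos j2 \<in> S"
  shows "a$(pos j2) \<le> a$(pos v)"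
proof -
  have pne: "pos j2 \<noteq> pos j1" using pos_neq[of j1 j2] S(2,3,4) kNi by simp
  show ?thesis
  proof (rule G[OF S(1) S(6)])
    fix t assume t: "t \<le> j2" "j2 < t + int k"
    show "(t \<le> v \<and> v < t + int k) \<or> (\<exists>j. t \<le> j \<and> j < t + int k \<and> pos j \<in> S \<and> pos j \<noteq> pos j2)"
    proof (cases "v < t + int k")
      case True
      then show ?thesis using t S(4) by simp
    next
      case False
      then show ?thesis using t S(2,3,5) pne by (intro disjI2 exI[of _ j1]) auto
    qed
  qed
qed

lemma claim1: "\<exists>j1 j2. t0 \<le> j1 \<and> j1 < j2 \<and> j2 < t0 + int k \<and> a$(pos j1) = mn \<and> a$(pos j2) = mn"
proof (rule ccontr)
  assume bad0: "\<not> ?thesis"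
  define Ed where "Ed = {d::nat. a$(pos (t0 + int k + int d)) = mn}"
  obtain l where l: "a$l = mn" using mn_ex by blast
  obtain dz where "pos (t0 + int k + int dz) = l" using exists_d by blast
  then have "dz \<in> Ed" using l unfolding Ed_def by simp
  define d0 where "d0 = (LEAST d. d \<in> Ed)"
  have d0E: "d0 \<in> Ed" unfolding d0_def using \<open>dz \<in> Ed\<close> by (rule LeastI)
  have d0min: "d < d0 \<Longrightarrow> d \<notin> Ed" for d unfolding d0_def by (rule not_less_Least)
  define v where "v = t0 + int k + int d0"
  have av: "a$(pos v) = mn" using d0E unfolding Ed_def v_def by simp
  have bad: False if j: "v - int k \<le> j1" "j1 < j2" "j2 < v" "a$(pos j1) = mn" "a$(pos j2) = mn" for j1 j2
  proof -
    have "j2 < t0 + int k"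
    proof (rule ccontr)
      assume "\<not> j2 < t0 + int k"
      define d' where "d' = nat (j2 - t0 - int k)"
      have di: "int d' = j2 - t0 - int k" unfolding d'_def using \<open>\<not> j2 < t0 + int k\<close> by simp
      then have "d' < d0" using j(3) unfolding v_def by simp
      then have "d' \<notin> Ed" by (rule d0min)
      moreover have "t0 + int k + int d' = j2" using di by simp
      ultimately show False using j(5) unfolding Ed_def by simp
    qed
    moreover have "t0 \<le> j1" using j(1) unfolding v_def by simp
    ultimately show False using bad0 j by blast
  qed
  obtain S j1 j2 where S: "root S" "v - int k \<le> j1" "j1 < j2" "j2 < v - int k + int k" "pos j1 \<in> S" "pos j2 \<in> S"
    using root_two[of "v - int k"] by blast
  have S4: "j2 < v" using S(4) by simp
  have pne: "pos j2 \<noteq> pos j1" using pos_neq[of j1 j2] S(2,3,4) kNi by simp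
  have "a$(pos j2) \<le> a$(pos v)" using lastM[OF S(1,2,3) S4 S(5,6)] .
  then have a2: "a$(pos j2) = mn" using av mn_le[of "pos j2"] by simp
  have a1: "a$(pos j1) \<noteq> mn" using bad[of j1 j2] S(2,3) S4 a2 by blast
  show False
  proof (cases "\<exists>w. j2 - int k \<le> w \<and> w \<le> j1 \<and> a$(pos w) = mn")
    case True
    then obtain w where w: "j2 - int k \<le> w" "w \<le> j1" "a$(pos w) = mn" by blast
    have "a$(pos j1) \<le> a$(pos w)"
    proof (rule G[OF S(1) S(5)])
      fix t assume t: "t \<le> j1" "j1 < t + int k"
      show "(t \<le> w \<and> w < t + int k) \<or> (\<exists>j. t \<le> j \<and> j < t + int k \<and> pos j \<in> S \<and> pos j \<noteq> pos j1)"
      proof (cases "j2 < t + int k")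
        case True
        then show ?thesis using t S(3,6) pne by (intro disjI2 exI[of _ j2]) auto
      next
        case False
        then show ?thesis using t w by simp
      qed
    qed
    then show False using w(3) a1 mn_le[of "pos j1"] by simp
  next
    case False
    show False
    proof (rule Mfree_impossible[of j2])
      show "a$(pos j2) = mn" by (rule a2)
      fix j assume j: "j2 - int k \<le> j" "j < j2"
      show "a$(pos j) \<noteq> mn"
      proof (cases "j \<le> j1")
        case True
        then show ?thesis using False j by blast
      next
        case False
        then show ?thesis using bad[of j j2] S(2) j(2) S4 a2 by auto
      qed
    qed
  qed
qed

lemma claim2:
  assumes gt: "mn < a$i" shows "a$i \<le> 2 * mn"
proof (rule ccontr)
  assume big: "\<not> a$i \<le> 2 * mn"
  obtain S where S: "root S" "i \<in> S" using root_in by blast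
  define x0 where "x0 = int (idx i)"
  have px: "pos x0 = i" unfolding x0_def by simp
  define Priv where "Priv = {t. x0 - int k < t \<and> t \<le> x0 \<and> \<not> (\<exists>j. t \<le> j \<and> j < t + int k \<and> pos j \<in> S \<and> pos j \<noteq> i)}"
  have finP: "finite Priv"
    by (rule finite_subset[of _ "{x0 - int k<..x0}"]) (auto simp: Priv_def)
  have star: False if y: "a$(pos y) = mn" "\<forall>t\<in>Priv. t \<le> y \<and> y < t + int k" for y
  proof -
    have "a$(pos x0) \<le> a$(pos y)"
    proof (rule G[OF S(1)])
      show "pos x0 \<in> S" using px S(2) by simp
      fix t assume t: "t \<le> x0" "x0 < t + int k"
      show "(t \<le> y \<and> y < t + int k) \<or> (\<exists>j. t \<le> j \<and> j < t + int k \<and> pos j \<in> S \<and> pos j \<noteq> pos x0)"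
      proof (cases "t \<in> Priv")
        case True
        then show ?thesis using y(2) by blast
      next
        case False
        then have "\<exists>j. t \<le> j \<and> j < t + int k \<and> pos j \<in> S \<and> pos j \<noteq> i" using t unfolding Priv_def by auto
        then show ?thesis using px by auto
      qed
    qed
    then show False using y(1) px gt by simp
  qed
  have Pne: "Priv \<noteq> {}"
  proof
    assume "Priv = {}"
    obtain l where l: "a$l = mn" using mn_ex by blast
    then have "a$(pos (int (idx l))) = mn" by simp
    then show False using star[of "int (idx l)"] \<open>Priv = {}\<close> by blast
  qed
  define tl where "tl = Min Priv"
  define tr where "tr = Max Priv"
  have tlP: "tl \<in> Priv" unfolding tl_def using finP Pne by (rule Min_in)
  have trP: "tr \<in> Priv" unfolding tr_def using finP Pne by (rule Max_in)
  have tlle: "t \<in> Priv \<Longrightarrow> tl \<le> t" for t unfolding tl_def using finP by (rule Min_le)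
  have trge: "t \<in> Priv \<Longrightarrow> t \<le> tr" for t unfolding tr_def using finP by (rule Max_ge)
  have b1: "x0 - int k < tl" "tr \<le> x0" using tlP trP unfolding Priv_def by auto
  have b2: "tl \<le> tr" using tlle trP by blast
  have noM: "a$(pos y) \<noteq> mn" if "tr \<le> y" "y < tl + int k" for y
  proof
    assume "a$(pos y) = mn"
    moreover have "\<forall>t\<in>Priv. t \<le> y \<and> y < t + int k"
    proof
      fix t assume "t \<in> Priv"
      then have "tl \<le> t" "t \<le> tr" using tlle trge by auto
      then show "t \<le> y \<and> y < t + int k" using that by simp
    qed
    ultimately show False using star by blast
  qed
  obtain j1 j2 where J: "tl \<le> j1" "j1 < j2" "j2 < tl + int k" "a$(pos j1) = mn" "a$(pos j2) = mn"
    using claim1[of tl] by blast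
  have "j1 < tr"
  proof (rule ccontr)
    assume "\<not> j1 < tr"
    then show False using noM[of j1] J by simp
  qed
  define U where "U = {j. tl \<le> j \<and> j < tr \<and> a$(pos j) = mn}"
  have finU: "finite U" by (rule finite_subset[of _ "{tl..<tr}"]) (auto simp: U_def)
  have "j1 \<in> U" unfolding U_def using J \<open>j1 < tr\<close> by simp
  then have Une: "U \<noteq> {}" by blast
  define u where "u = Max U"
  have uU: "u \<in> U" unfolding u_def using finU Une by (rule Max_in)
  have umax: "j \<in> U \<Longrightarrow> j \<le> u" for j unfolding u_def using finU by (rule Max_ge)
  have u: "tl \<le> u" "u < tr" "a$(pos u) = mn" using uU unfolding U_def by auto
  obtain j1' j2' where J': "tr \<le> j1'" "j1' < j2'" "j2' < tr + int k" "a$(pos j1') = mn" "a$(pos j2') = mn"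
    using claim1[of tr] by blast
  have "tl + int k \<le> j1'"
  proof (rule ccontr)
    assume "\<not> tl + int k \<le> j1'"
    then show False using noM[of j1'] J' by simp
  qed
  define Vs where "Vs = {j. tl + int k \<le> j \<and> j < tr + int k \<and> a$(pos j) = mn}"
  have finV: "finite Vs" by (rule finite_subset[of _ "{tl + int k..<tr + int k}"]) (auto simp: Vs_def)
  have "j1' \<in> Vs" unfolding Vs_def using J' \<open>tl + int k \<le> j1'\<close> by simp
  then have Vne: "Vs \<noteq> {}" by blast
  define v where "v = Min Vs"
  have vV: "v \<in> Vs" unfolding v_def using finV Vne by (rule Min_in)
  have vmin: "j \<in> Vs \<Longrightarrow> v \<le> j" for j unfolding v_def using finV by (rule Min_le)
  have v: "tl + int k \<le> v" "v < tr + int k" "a$(pos v) = mn" using vV unfolding Vs_def by auto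
  have vu: "v \<le> u + int k"
  proof -
    obtain e1 e2 where E: "u + 1 \<le> e1" "e1 < e2" "e2 < u + 1 + int k" "a$(pos e1) = mn" "a$(pos e2) = mn"
      using claim1[of "u + 1"] by blast
    have "tr \<le> e1"
    proof (rule ccontr)
      assume "\<not> tr \<le> e1"
      then have "e1 \<in> U" unfolding U_def using E u by simp
      then have "e1 \<le> u" by (rule umax)
      then show False using E by simp
    qed
    have "tl + int k \<le> e1"
    proof (rule ccontr)
      assume "\<not> tl + int k \<le> e1"
      then show False using noM[of e1] E \<open>tr \<le> e1\<close> by simp
    qed
    then have "e1 \<in> Vs" unfolding Vs_def using E u(2) by simp
    then have "v \<le> e1" by (rule vmin)
    then show ?thesis using E by simp
  qed
  define S' where "S' = insert (pos u) (insert (pos v) (S - {i}))"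
  have "cov S'" unfolding cov_def
  proof
    fix t
    obtain j where j: "t \<le> j" "j < t + int k" "pos j \<in> S" using S(1) unfolding root_def cov_def by blast
    show "\<exists>j. t \<le> j \<and> j < t + int k \<and> pos j \<in> S'"
    proof (cases "pos j = i")
      case False
      then show ?thesis using j unfolding S'_def by blast
    next
      case True
      then have "pos j = pos x0" using px by simp
      then obtain c where c: "j = x0 + c * int CARD('n)" by (rule pos_shift)
      define t' where "t' = t - c * int CARD('n)"
      have t': "t' \<le> x0" "x0 < t' + int k" using j c unfolding t'_def by simp_all
      show ?thesis
      proof (cases "\<exists>j'. t' \<le> j' \<and> j' < t' + int k \<and> pos j' \<in> S \<and> pos j' \<noteq> i")
        case True
        then obtain j' where j': "t' \<le> j'" "j' < t' + int k" "pos j' \<in> S" "pos j' \<noteq> i" by blast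
        have "pos (j' + c * int CARD('n)) = pos j'" by simp
        then show ?thesis using j' unfolding S'_def t'_def by (intro exI[of _ "j' + c * int CARD('n)"]) auto
      next
        case False
        then have "t' \<in> Priv" using t' unfolding Priv_def by auto
        then have tt: "tl \<le> t'" "t' \<le> tr" using tlle trge by auto
        show ?thesis
        proof (cases "t' \<le> u")
          case True
          have "pos (u + c * int CARD('n)) = pos u" by simp
          moreover have "u < t' + int k" using u(2) b1 tt by simp
          ultimately show ?thesis using True unfolding S'_def t'_def by (intro exI[of _ "u + c * int CARD('n)"]) auto
        next
          case False
          have "pos (v + c * int CARD('n)) = pos v" by simp
          moreover have "t' \<le> v" using tt b1 v(1) by simp
          moreover have "v < t' + int k" using vu False by simp
          ultimately show ?thesis unfolding S'_def t'_def by (intro exI[of _ "v + c * int CARD('n)"]) auto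
        qed
      qed
    qed
  qed
  then have "\<alpha> \<le> wt S'" by (rule valid)
  also have "wt S' \<le> a$(pos u) + wt (insert (pos v) (S - {i}))" unfolding S'_def by (rule wt_insert_le)
  also have "wt (insert (pos v) (S - {i})) \<le> a$(pos v) + wt (S - {i})" by (rule wt_insert_le)
  also have "wt (S - {i}) = wt S - a$i" using wt_remove[OF S(2)] by simp
  finally show False using S(1) u(3) v(3) big unfolding root_def by simp
qed
end

theorem mainTheorem2:
  fixes idx :: "'n::finite \<Rightarrow> nat" and k :: nat and a :: "int^'n" and \<alpha> :: int
  assumes "is_labelling idx"
    and "1 \<le> k" and "k \<le> CARD('n) - 1"
    and "facet_defining (Qcov idx k) a \<alpha>"
    and "\<not> is_boolean_facet idx k a \<alpha>"
    and "\<not> is_rank_constraint k a \<alpha>"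
  shows "(\<forall>i. card (cycC idx k i \<inter> - {j. a$j > Min (range (\<lambda>l. a$l))}) \<ge> 2)
       \<and> (\<forall>i\<in>{j. a$j > Min (range (\<lambda>l. a$l))}. a$i \<le> 2 * Min (range (\<lambda>l. a$l)))"
proof -
  have c0: "0 < CARD('n)" by simp
  have kN: "k < CARD('n)" using assms(3) c0 by linarith
  interpret fac idx k a \<alpha>
  proof unfold_locales
    show "is_labelling idx" by (rule assms(1))
    show "1 \<le> k" by (rule assms(2))
    show "k < CARD('n)" by (rule kN)
    show "facet_defining (Qcov idx k) a \<alpha>" by (rule assms(4))
    show "\<not> is_boolean_facet idx k a \<alpha>" by (rule assms(5))
  qed
  have mm: "Min (range (\<lambda>l. a$l)) = mn" by (simp add: mn_def)
  have P1: "card (cycC idx k i \<inter> - {j. a$j > mn}) \<ge> 2" for i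
  proof -
    obtain j1 j2 where J: "int (idx i) \<le> j1" "j1 < j2" "j2 < int (idx i) + int k" "a$(pos j1) = mn" "a$(pos j2) = mn"
      using claim1[of "int (idx i)"] by blast
    have ne: "pos j2 \<noteq> pos j1" using pos_neq[of j1 j2] J kNi by simp
    have "pos j1 \<in> cycC idx k i" "pos j2 \<in> cycC idx k i" unfolding cycC_eq using J by auto
    then have "{pos j1, pos j2} \<subseteq> cycC idx k i \<inter> - {j. a$j > mn}" using J by auto
    then have "card {pos j1, pos j2} \<le> card (cycC idx k i \<inter> - {j. a$j > mn})"
      by (intro card_mono) simp_all
    moreover have "card {pos j1, pos j2} = 2" using ne by simp
    ultimately show ?thesis by simp
  qed
  have P2: "a$i \<le> 2 * mn" if "i \<in> {j. a$j > mn}" for i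
    using that claim2 by simp
  show ?thesis unfolding mm using P1 P2 by blast
qed

end
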